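(* Let $(A,[\cdot,\cdot])$ be an Acaa-algebra over a field $\mathbb K$ of characteristic $0$, and for $X\in A$ let $\mathrm{ad}\,X\in\mathrm{End}(A)$ be $\mathrm{ad}\,X(Y)=[X,Y]$. Then for all $X,Y\in A$: (1) $\mathrm{ad}\,X\circ\mathrm{ad}\,Y+\mathrm{ad}\,Y\circ\mathrm{ad}\,X=0$; (2) $2\,\mathrm{ad}[X,Y]=-\mathrm{ad}\,X\circ\mathrm{ad}\,Y+\mathrm{ad}\,Y\circ\mathrm{ad}\,X=-(\mathrm{ad}\,X\circ\mathrm{ad}\,Y-\mathrm{ad}\,Y\circ\mathrm{ad}\,X)$.
   Context: An Acaa-algebra over a field $\mathbb K$ of characteristic $0$ is a $\mathbb K$-vector space $A$ with a bilinear product $[\cdot,\cdot]$ which is anticommutative, $[x,y]=-[y,x]$, and satisfies $[x_1,[x_2,x_3]]=[x_2,[x_3,x_1]]$ for all $x_1,x_2,x_3\in A$. *)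

theory Defs
  imports Complex_Main
begin

definition acaa_algebra ::
  "('k::field \<Rightarrow> 'a::ab_group_add \<Rightarrow> 'a) \<Rightarrow> ('a \<Rightarrow> 'a \<Rightarrow> 'a) \<Rightarrow> bool" where
  "acaa_algebra scale br \<longleftrightarrow>
     vector_space scale \<and>
     (\<forall>x. Vector_Spaces.linear scale scale (br x)) \<and>
     (\<forall>y. Vector_Spaces.linear scale scale (\<lambda>x. br x y)) \<and>
     (\<forall>x y. br x y = - br y x) \<and>
     (\<forall>x1 x2 x3. br x1 (br x2 x3) = br x2 (br x3 x1))"

definition ad :: "('a \<Rightarrow> 'a \<Rightarrow> 'a) \<Rightarrow> 'a \<Rightarrow> 'a \<Rightarrow> 'a" where
  "ad br X = (\<lambda>Y. br X Y)"

end

theory Submission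
  imports Defs
begin

theorem mainTheorem7:
  fixes scale :: "'k::field_char_0 \<Rightarrow> 'a::ab_group_add \<Rightarrow> 'a"
    and br :: "'a \<Rightarrow> 'a \<Rightarrow> 'a"
  assumes "acaa_algebra scale br"
  shows "\<forall>X Y.
     (\<lambda>Z. (ad br X \<circ> ad br Y) Z + (ad br Y \<circ> ad br X) Z) = (\<lambda>Z. 0) \<and>
     (\<lambda>Z. scale 2 (ad br (br X Y) Z)) = (\<lambda>Z. - (ad br X \<circ> ad br Y) Z + (ad br Y \<circ> ad br X) Z) \<and>
     (\<lambda>Z. - (ad br X \<circ> ad br Y) Z + (ad br Y \<circ> ad br X) Z)
        = (\<lambda>Z. - ((ad br X \<circ> ad br Y) Z - (ad br Y \<circ> ad br X) Z))"
proof -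
  have vs: "vector_space scale" and lin: "\<And>x. Vector_Spaces.linear scale scale (br x)"
    and ac: "\<And>x y. br x y = - br y x"
    and cy: "\<And>x1 x2 x3. br x1 (br x2 x3) = br x2 (br x3 x1)"
    using assms unfolding acaa_algebra_def by blast+
  have neg: "\<And>x y. br x (- y) = - br x y"
    using lin by (metis module_hom.neg linear_iff_module_hom)
  have two: "\<And>v. scale 2 v = v + v"
  proof -
    fix v
    have "scale (1 + 1) v = scale 1 v + scale 1 v"
      using vs unfolding vector_space_def by blast
    moreover have "scale 1 v = v" using vs by (simp add: vector_space_def)
    ultimately show "scale 2 v = v + v" by (metis one_add_one)
  qed
  have p1: "\<And>X Y Z. br Y (br X Z) = - br X (br Y Z)"
  proof -
    fix X Y Z
    have "br Y (br X Z) = br Y (- br Z X)" using ac by metis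
    also have "\<dots> = - br Y (br Z X)" by (rule neg)
    also have "br Y (br Z X) = br X (br Y Z)" using cy by metis
    finally show "br Y (br X Z) = - br X (br Y Z)" .
  qed
  have p2: "\<And>X Y Z. br (br X Y) Z = - br X (br Y Z)"
  proof -
    fix X Y Z
    have "br (br X Y) Z = - br Z (br X Y)" by (rule ac)
    also have "br Z (br X Y) = br X (br Y Z)" using cy by metis
    finally show "br (br X Y) Z = - br X (br Y Z)" by simp
  qed
  show ?thesis
  proof (intro allI conjI)
    fix X Y
    show "(\<lambda>Z. (ad br X \<circ> ad br Y) Z + (ad br Y \<circ> ad br X) Z) = (\<lambda>Z. 0)"
      unfolding ad_def fun_eq_iff comp_def
    proof
      fix Z show "br X (br Y Z) + br Y (br X Z) = 0" using p1[of Y X Z] by simp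
    qed
    show "(\<lambda>Z. scale 2 (ad br (br X Y) Z)) = (\<lambda>Z. - (ad br X \<circ> ad br Y) Z + (ad br Y \<circ> ad br X) Z)"
      unfolding ad_def fun_eq_iff comp_def
    proof
      fix Z show "scale 2 (br (br X Y) Z) = - br X (br Y Z) + br Y (br X Z)"
        unfolding two p2[of X Y Z] p1[of Y X Z] ..
    qed
    show "(\<lambda>Z. - (ad br X \<circ> ad br Y) Z + (ad br Y \<circ> ad br X) Z)
        = (\<lambda>Z. - ((ad br X \<circ> ad br Y) Z - (ad br Y \<circ> ad br X) Z))"
      by (simp add: fun_eq_iff)
  qed
qed

end
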